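(* Let $n\ge 3$ and let $P_n(x)=x^n+a_{n-2}x^{n-2}+\cdots+a_1x+a_0$ be a real monic polynomial of degree $n$ whose coefficient of $x^{n-1}$ is zero. Put $P_{n-1}=\frac1n P_n'$ and define $R_{n-2}$ by $$P_n(x)=\frac{x}{n}P_n'(x)-R_{n-2}(x)=xP_{n-1}(x)-R_{n-2}(x).$$ Assume $P_{n-1}$ has $n-1$ distinct real roots $\alpha_1<\alpha_2<\cdots<\alpha_{n-1}$ and $R_{n-2}$ has $n-2$ distinct real roots $\beta_1<\cdots<\beta_{n-2}$. If $n$ is even, then $$\alpha_1<\beta_1<\alpha_2<\beta_2<\cdots<\alpha_{n-2}<\beta_{n-2}<\alpha_{n-1}$$ if and only if $$\max_{k\in\{1,\dots,\frac{n-2}{2}\}}R_{n-2}(\alpha_{2k})<0<\min_{k\in\{0,\dots,\frac{n-2}{2}\}}R_{n-2}(\alpha_{2k+1}).$$ If $n$ is odd, then the same interlacing holds if and only if $$\max_{k\in\{0,\dots,\frac{n-3}{2}\}}R_{n-2}(\alpha_{2k+1})<0<\min_{k\in\{1,\dots,\frac{n-1}{2}\}}R_{n-2}(\alpha_{2k}).$$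
   Context: All polynomials have real coefficients. $R_{n-2}(x)=xP_{n-1}(x)-P_n(x)=\sum_{k=0}^{n-2}\left(\tfrac{k}{n}-1\right)a_kx^k$. *)

theory Defs
  imports "HOL-Computational_Algebra.Polynomial"
begin

end

theory Submission imports Defs begin

lemma mono_chain:
  fixes f :: "nat \<Rightarrow> real"
  assumes "\<And>i. 1 \<le> i \<Longrightarrow> i < N \<Longrightarrow> f i < f (i + 1)"
  shows "1 \<le> i \<Longrightarrow> i < j \<Longrightarrow> j \<le> N \<Longrightarrow> f i < f j"
proof (induction j)
  case 0 then show ?case by simp
next
  case (Suc j)
  show ?case
  proof (cases "i = j")
    case True then show ?thesis using assms Suc.prems by auto
  next
    case False
    then have "f i < f j" using Suc by auto
    also have "f j < f (Suc j)" using assms[of j] Suc.prems False by auto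
    finally show ?thesis .
  qed
qed

lemma prod_lin:
  fixes r :: "nat \<Rightarrow> real"
  defines "q \<equiv> \<lambda>m. \<Prod>i\<in>{1..m}. [:-r i, 1:]"
  shows "degree (q m) = m \<and> coeff (q m) m = 1 \<and>
    (m \<ge> 1 \<longrightarrow> coeff (q m) (m - 1) = - (\<Sum>i\<in>{1..m}. r i)) \<and>
    (m \<ge> 2 \<longrightarrow> coeff (q m) (m - 2) = ((\<Sum>i\<in>{1..m}. r i)^2 - (\<Sum>i\<in>{1..m}. (r i)^2)) / 2)"
proof (induction m)
  case 0 then show ?case by (simp add: q_def)
next
  case (Suc m)
  have qS: "q (Suc m) = q m * [:-r (Suc m), 1:]" by (simp add: q_def)
  have cf: "coeff (q (Suc m)) k = (if k = 0 then 0 else coeff (q m) (k - 1)) - r (Suc m) * coeff (q m) k" for k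
    by (simp add: qS coeff_pCons split: nat.split)
  have dq: "degree (q (Suc m)) = Suc m"
    unfolding qS by (subst degree_mult_eq) (use Suc.IH in auto)
  have hi: "coeff (q m) (Suc m) = 0" using Suc.IH by (simp add: coeff_eq_0)
  have c1: "coeff (q (Suc m)) (Suc m) = 1" using cf[of "Suc m"] Suc.IH hi by simp
  have c2: "coeff (q (Suc m)) m = - (\<Sum>i\<in>{1..Suc m}. r i)"
  proof (cases m)
    case 0 then show ?thesis using cf[of 0] Suc.IH by (simp add: q_def)
  next
    case (Suc k)
    then show ?thesis using cf[of m] Suc.IH by (simp add: Suc)
  qed
  have c3: "coeff (q (Suc m)) (Suc m - 2) = ((\<Sum>i\<in>{1..Suc m}. r i)^2 - (\<Sum>i\<in>{1..Suc m}. (r i)^2)) / 2"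
    if "Suc m \<ge> 2"
  proof (cases "m = 1")
    case True then show ?thesis using cf[of 0] by (simp add: q_def power2_eq_square field_simps)
  next
    case False
    then have m2: "m \<ge> 2" using that by auto
    then obtain k where mk: "m = Suc (Suc k)" by (metis add_2_eq_Suc le_Suc_ex)
    have "coeff (q (Suc m)) (m - 1) = coeff (q m) (m - 2) - r (Suc m) * coeff (q m) (m - 1)"
      using cf[of "m - 1"] mk by (simp add: numeral_2_eq_2)
    then show ?thesis using Suc.IH m2 by (simp add: power2_eq_square field_simps)
  qed
  show ?case using dq c1 c2 c3 by simp
qed

lemma factor_poly:
  fixes p :: "real poly" and r :: "nat \<Rightarrow> real"
  assumes deg: "degree p = m"
    and inj: "inj_on r {1..m}"
    and roots: "\<And>i. i \<in> {1..m} \<Longrightarrow> poly p (r i) = 0"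
  shows "p = smult (lead_coeff p) (\<Prod>i\<in>{1..m}. [:-r i, 1:])"
proof (rule poly_eqI_degree_lead_coeff[where n = m and A = "r ` {1..m}"])
  have pl: "degree (\<Prod>i\<in>{1..m}. [:-r i, 1:]) = m \<and> coeff (\<Prod>i\<in>{1..m}. [:-r i, 1:]) m = 1"
    using prod_lin[of r m] by simp
  show "coeff p m = coeff (smult (lead_coeff p) (\<Prod>i\<in>{1..m}. [:-r i, 1:])) m"
    using pl deg by simp
  show "m \<le> card (r ` {1..m})" using card_image[OF inj] by simp
  show "degree p \<le> m" using deg by simp
  show "degree (smult (lead_coeff p) (\<Prod>i\<in>{1..m}. [:-r i, 1:])) \<le> m"
    using pl by (metis degree_smult_le order.trans)
  show "poly p z = poly (smult (lead_coeff p) (\<Prod>i\<in>{1..m}. [:-r i, 1:])) z" if zin: "z \<in> r ` {1..m}" for z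
  proof -
    obtain i where i: "i \<in> {1..m}" "z = r i" using zin by blast
    have "poly (\<Prod>i\<in>{1..m}. [:-r i, 1:]) z = (\<Prod>j\<in>{1..m}. z - r j)" by (simp add: poly_prod)
    also have "\<dots> = 0" using i by (intro prod_zero) auto
    finally show ?thesis using roots i by simp
  qed
qed

lemma prod_sign:
  fixes f :: "nat \<Rightarrow> real"
  assumes "finite A"
  shows "(\<Prod>i\<in>A. f i) = (-1) ^ card {i\<in>A. f i < 0} * (\<Prod>i\<in>A. \<bar>f i\<bar>)"
  using assms
proof (induction A rule: finite_induct)
  case empty then show ?case by simp
next
  case (insert a A)
  show ?case
  proof (cases "f a < 0")
    case True
    have "{i \<in> insert a A. f i < 0} = insert a {i\<in>A. f i < 0}" using True by auto
    moreover have "card (insert a {i\<in>A. f i < 0}) = Suc (card {i\<in>A. f i < 0})"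
      using insert by simp
    ultimately show ?thesis using insert True by simp
  next
    case False
    have "{i \<in> insert a A. f i < 0} = {i\<in>A. f i < 0}" using False by auto
    then show ?thesis using insert False by simp
  qed
qed


lemma even_case:
  fixes g :: "nat \<Rightarrow> real"
  assumes "even n" "n \<ge> 3"
  shows "((\<forall>k\<in>{1..(n-2) div 2}. g (2*k) < 0) \<and> (\<forall>k\<in>{0..(n-2) div 2}. 0 < g (2*k+1))) \<longleftrightarrow>
    (\<forall>i\<in>{1..n - 1}. if even (n - 1 - i) then g i > 0 else g i < 0)"
proof safe
  fix i assume A: "\<forall>k\<in>{1..(n-2) div 2}. g (2*k) < 0" "\<forall>k\<in>{0..(n-2) div 2}. 0 < g (2*k+1)"
    and i: "i \<in> {1..n - 1}"
  show "if even (n - 1 - i) then g i > 0 else g i < 0"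
  proof (cases "even i")
    case True
    then obtain k where k: "i = 2*k" by blast
    have "k \<in> {1..(n-2) div 2}" using i k assms unfolding atLeastAtMost_iff by presburger
    moreover have "odd (n - 1 - i)" using True i assms by auto
    ultimately show ?thesis using A k by auto
  next
    case False
    then obtain k where k: "i = 2*k+1" using oddE by blast
    have "k \<in> {0..(n-2) div 2}" using i k assms unfolding atLeastAtMost_iff by presburger
    moreover have "even (n - 1 - i)" using False i assms by auto
    ultimately show ?thesis using A k by auto
  qed
next
  fix k assume A: "\<forall>i\<in>{1..n - 1}. if even (n - 1 - i) then g i > 0 else g i < 0"
  { assume k: "k \<in> {1..(n-2) div 2}"
    then have "2*k \<in> {1..n-1}" "odd (n - 1 - 2*k)" using assms by auto
    then show "g (2*k) < 0" using A by fastforce }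
  { assume k: "k \<in> {0..(n-2) div 2}"
    then have "2*k+1 \<in> {1..n-1}" "even (n - 1 - (2*k+1))" using assms by auto
    then show "0 < g (2*k+1)" using A by fastforce }
qed

lemma odd_case:
  fixes g :: "nat \<Rightarrow> real"
  assumes "odd n" "n \<ge> 3"
  shows "((\<forall>k\<in>{0..(n-3) div 2}. g (2*k+1) < 0) \<and> (\<forall>k\<in>{1..(n-1) div 2}. 0 < g (2*k))) \<longleftrightarrow>
    (\<forall>i\<in>{1..n - 1}. if even (n - 1 - i) then g i > 0 else g i < 0)"
proof safe
  fix i assume A: "\<forall>k\<in>{0..(n-3) div 2}. g (2*k+1) < 0" "\<forall>k\<in>{1..(n-1) div 2}. 0 < g (2*k)"
    and i: "i \<in> {1..n - 1}"
  show "if even (n - 1 - i) then g i > 0 else g i < 0"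
  proof (cases "even i")
    case True
    then obtain k where k: "i = 2*k" by blast
    have "k \<in> {1..(n-1) div 2}" using i k assms unfolding atLeastAtMost_iff by presburger
    moreover have "even (n - 1 - i)" using True i assms by auto
    ultimately show ?thesis using A k by auto
  next
    case False
    then obtain k where k: "i = 2*k+1" using oddE by blast
    have "k \<in> {0..(n-3) div 2}" using i k assms unfolding atLeastAtMost_iff by presburger
    moreover have "odd (n - 1 - i)" using False i assms by auto
    ultimately show ?thesis using A k by auto
  qed
next
  fix k assume A: "\<forall>i\<in>{1..n - 1}. if even (n - 1 - i) then g i > 0 else g i < 0"
  { assume k: "k \<in> {0..(n-3) div 2}"
    then have "2*k+1 \<in> {1..n-1}" "odd (n - 1 - (2*k+1))" using assms by auto
    then show "g (2*k+1) < 0" using A by fastforce }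
  { assume k: "k \<in> {1..(n-1) div 2}"
    then have "2*k \<in> {1..n-1}" "even (n - 1 - 2*k)" using assms by auto
    then show "0 < g (2*k)" using A by fastforce }
qed

theorem proposition1:
  fixes P Q R :: "real poly" and n :: nat and \<alpha> \<beta> :: "nat \<Rightarrow> real"
  assumes n3: "n \<ge> 3"
    and degP: "degree P = n" and monic: "lead_coeff P = 1"
    and coeff_n1: "coeff P (n - 1) = 0"
    and Q_def: "Q = smult (1 / real n) (pderiv P)"
    and R_def: "R = [:0, 1:] * Q - P"
    and alpha_mono: "\<And>i. 1 \<le> i \<Longrightarrow> i < n - 1 \<Longrightarrow> \<alpha> i < \<alpha> (i + 1)"
    and alpha_roots: "{x. poly Q x = 0} = \<alpha> ` {1..n - 1}"
    and beta_mono: "\<And>i. 1 \<le> i \<Longrightarrow> i < n - 2 \<Longrightarrow> \<beta> i < \<beta> (i + 1)"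
    and beta_roots: "{x. poly R x = 0} = \<beta> ` {1..n - 2}"
  shows
    "(even n \<longrightarrow>
       ((\<forall>i\<in>{1..n - 2}. \<alpha> i < \<beta> i \<and> \<beta> i < \<alpha> (i + 1)) \<longleftrightarrow>
        (Max ((\<lambda>k. poly R (\<alpha> (2 * k))) ` {1..(n - 2) div 2}) < 0 \<and>
         0 < Min ((\<lambda>k. poly R (\<alpha> (2 * k + 1))) ` {0..(n - 2) div 2})))) \<and>
     (odd n \<longrightarrow>
       ((\<forall>i\<in>{1..n - 2}. \<alpha> i < \<beta> i \<and> \<beta> i < \<alpha> (i + 1)) \<longleftrightarrow>
        (Max ((\<lambda>k. poly R (\<alpha> (2 * k + 1))) ` {0..(n - 3) div 2}) < 0 \<and>
         0 < Min ((\<lambda>k. poly R (\<alpha> (2 * k))) ` {1..(n - 1) div 2}))))"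
proof -
  define m where "m = n - 2"
  have nm: "n = m + 2" using n3 m_def by simp
  have m1: "m \<ge> 1" using n3 m_def by simp
  have amono: "\<And>i j. 1 \<le> i \<Longrightarrow> i < j \<Longrightarrow> j \<le> n - 1 \<Longrightarrow> \<alpha> i < \<alpha> j"
    using mono_chain[of "n - 1" \<alpha>] alpha_mono by blast
  have bmono: "\<And>i j. 1 \<le> i \<Longrightarrow> i < j \<Longrightarrow> j \<le> m \<Longrightarrow> \<beta> i < \<beta> j"
    using mono_chain[of m \<beta>] beta_mono m_def by blast
  have ainj: "inj_on \<alpha> {1..n - 1}"
    by (rule inj_onI) (metis amono atLeastAtMost_iff linorder_neqE_nat less_irrefl)
  have binj: "inj_on \<beta> {1..m}"
    by (rule inj_onI) (metis bmono atLeastAtMost_iff linorder_neqE_nat less_irrefl)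
  have cQ: "coeff Q k = real (Suc k) / real n * coeff P (Suc k)" for k
    by (simp add: Q_def coeff_pderiv)
  have degQ: "degree Q = n - 1" using n3 degP by (simp add: Q_def degree_pderiv)
  have lcQ: "lead_coeff Q = 1" using degQ cQ[of "n - 1"] n3 monic degP by simp
  have Qf: "Q = (\<Prod>i\<in>{1..n - 1}. [:-\<alpha> i, 1:])"
  proof -
    have "\<And>i. i \<in> {1..n - 1} \<Longrightarrow> poly Q (\<alpha> i) = 0" using alpha_roots by blast
    then show ?thesis using factor_poly[OF degQ ainj] lcQ by simp
  qed
  have vieta: "coeff Q (n - 1 - 1) = - (\<Sum>i\<in>{1..n - 1}. \<alpha> i)"
     "coeff Q (n - 1 - 2) = ((\<Sum>i\<in>{1..n - 1}. \<alpha> i)^2 - (\<Sum>i\<in>{1..n - 1}. (\<alpha> i)^2)) / 2"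
    using prod_lin[of \<alpha> "n - 1"] n3 Qf by auto
  have s0: "(\<Sum>i\<in>{1..n - 1}. \<alpha> i) = 0"
    using vieta(1) cQ[of "n - 2"] coeff_n1 n3 by (simp add: Suc_diff_Suc numeral_2_eq_2)
  have sq: "(\<Sum>i\<in>{1..n - 1}. (\<alpha> i)^2) > 0"
  proof -
    have "\<alpha> 1 \<noteq> 0 \<or> \<alpha> 2 \<noteq> 0" proof - have "\<alpha> 1 < \<alpha> 2" using amono[of 1 2] n3 by simp then show ?thesis by auto qed
    then obtain j where j: "j \<in> {1..n - 1}" "\<alpha> j \<noteq> 0"
    proof
      assume "\<alpha> 1 \<noteq> 0" then show thesis using that[of 1] n3 by auto
    next
      assume "\<alpha> 2 \<noteq> 0" then show thesis using that[of 2] n3 by auto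
    qed
    show ?thesis by (rule sum_pos2[OF _ j(1)]) (use j in auto)
  qed
  have an2: "coeff P (n - 2) < 0"
  proof -
    have "coeff Q (n - 3) < 0" using vieta(2) s0 sq by (simp add: numeral_3_eq_3 numeral_2_eq_2 diff_diff_add)
    moreover have "coeff Q (n - 3) = real (n - 2) / real n * coeff P (n - 2)"
      using cQ[of "n - 3"] n3 by (simp add: numeral_3_eq_3 numeral_2_eq_2 Suc_diff_Suc)
    moreover have "real (n - 2) / real n > 0" using n3 by simp
    ultimately show ?thesis by (metis mult_less_0_iff not_less_iff_gr_or_eq)
  qed
  have cR: "coeff R k = (real k / real n - 1) * coeff P k" for k
  proof (cases k)
    case 0 then show ?thesis by (simp add: R_def)
  next
    case (Suc j)
    then show ?thesis using n3 by (simp add: R_def cQ coeff_pCons field_simps)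
  qed
  have degR: "degree R = m"
  proof (rule antisym)
    show "degree R \<le> m"
    proof (rule degree_le, intro allI impI)
      fix k assume "m < k"
      then consider "k = n - 1" | "k = n" | "k > n" using nm by linarith
      then show "coeff R k = 0"
        by cases (use cR coeff_n1 degP n3 in \<open>auto simp: coeff_eq_0\<close>)
    qed
    have "coeff R m \<noteq> 0" using cR[of m] an2 m_def n3 by simp
    then show "m \<le> degree R" by (rule le_degree)
  qed
  have lcR: "lead_coeff R > 0"
  proof -
    have "real m / real n - 1 < 0" using nm by simp
    then show ?thesis using degR cR[of m] an2 m_def by (simp add: mult_neg_neg)
  qed
  have Rf: "R = smult (lead_coeff R) (\<Prod>i\<in>{1..m}. [:-\<beta> i, 1:])"
  proof -
    have "\<And>i. i \<in> {1..m} \<Longrightarrow> poly R (\<beta> i) = 0" using beta_roots m_def by blast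
    then show ?thesis using factor_poly[OF degR binj] by simp
  qed
  define c where "c x = card {j\<in>{1..m}. \<beta> j > x}" for x
  have sign: "poly R x \<noteq> 0 \<and> (poly R x > 0 \<longleftrightarrow> even (c x))" if x: "x \<notin> \<beta> ` {1..m}" for x
  proof -
    have "poly R x = lead_coeff R * (\<Prod>j\<in>{1..m}. x - \<beta> j)"
      by (subst Rf) (simp add: poly_prod)
    also have "(\<Prod>j\<in>{1..m}. x - \<beta> j) = (-1) ^ c x * (\<Prod>j\<in>{1..m}. \<bar>x - \<beta> j\<bar>)"
      unfolding c_def by (subst prod_sign) auto
    finally have e: "poly R x = lead_coeff R * ((-1) ^ c x * (\<Prod>j\<in>{1..m}. \<bar>x - \<beta> j\<bar>))" .
    have pp: "(\<Prod>j\<in>{1..m}. \<bar>x - \<beta> j\<bar>) > 0" using x by (intro prod_pos) force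
    define A where "A = lead_coeff R * (\<Prod>j\<in>{1..m}. \<bar>x - \<beta> j\<bar>)"
    have lp: "A > 0" using pp lcR unfolding A_def by simp
    have e2: "poly R x = (-1) ^ c x * A" using e unfolding A_def by simp
    have "(-1::real)^c x = (if even (c x) then 1 else -1)" by simp
    then show ?thesis using e2 lp by (cases "even (c x)") auto
  qed
  define Alt where "Alt = (\<forall>i\<in>{1..n - 1}. if even (n - 1 - i) then poly R (\<alpha> i) > 0 else poly R (\<alpha> i) < 0)"
  define I where "I = (\<forall>i\<in>{1..n - 2}. \<alpha> i < \<beta> i \<and> \<beta> i < \<alpha> (i + 1))"
  have ale: "\<And>i j. 1 \<le> i \<Longrightarrow> i \<le> j \<Longrightarrow> j \<le> n - 1 \<Longrightarrow> \<alpha> i \<le> \<alpha> j"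
    using amono by (metis le_less order.refl)
  have ble: "\<And>i j. 1 \<le> i \<Longrightarrow> i \<le> j \<Longrightarrow> j \<le> m \<Longrightarrow> \<beta> i \<le> \<beta> j"
    using bmono by (metis le_less order.refl)
  have finS: "finite {j\<in>{1..m}. \<beta> j > x}" for x by simp
  have key: "I \<longleftrightarrow> Alt"
  proof
    assume I: I
    show Alt unfolding Alt_def
    proof
      fix i assume i: "i \<in> {1..n - 1}"
      have notin: "\<alpha> i \<notin> \<beta> ` {1..m}"
      proof
        assume "\<alpha> i \<in> \<beta> ` {1..m}"
        then obtain j where j: "j \<in> {1..m}" "\<alpha> i = \<beta> j" by blast
        show False
        proof (cases "j \<ge> i")
          case True
          have "i \<in> {1..n - 2}" using i True j(1) m_def by auto
          then have "\<alpha> i < \<beta> i" using I unfolding I_def by blast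
          also have "\<beta> i \<le> \<beta> j" using ble[of i j] True i j by auto
          finally show False using j by simp
        next
          case False
          have "j \<in> {1..n - 2}" using j(1) m_def by auto
          then have "\<beta> j < \<alpha> (j + 1)" using I unfolding I_def by blast
          also have "\<alpha> (j + 1) \<le> \<alpha> i" using ale[of "j+1" i] False i by auto
          finally show False using j by simp
        qed
      qed
      have "{j\<in>{1..m}. \<beta> j > \<alpha> i} = {i..m}"
      proof (intro set_eqI iffI)
        fix j assume j: "j \<in> {j\<in>{1..m}. \<beta> j > \<alpha> i}"
        show "j \<in> {i..m}"
        proof (rule ccontr)
          assume "j \<notin> {i..m}"
          then have "j < i" using j by auto
          have "\<beta> j < \<alpha> (j + 1)" using I j unfolding I_def m_def by auto
          also have "\<alpha> (j + 1) \<le> \<alpha> i" using ale[of "j+1" i] \<open>j < i\<close> i by auto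
          finally show False using j by simp
        qed
      next
        fix j assume j: "j \<in> {i..m}"
        have "\<alpha> i < \<beta> i" using I i j unfolding I_def m_def by auto
        also have "\<beta> i \<le> \<beta> j" using ble[of i j] i j by auto
        finally show "j \<in> {j\<in>{1..m}. \<beta> j > \<alpha> i}" using i j by auto
      qed
      then have "c (\<alpha> i) = n - 1 - i" unfolding c_def using nm by simp
      then show "if even (n - 1 - i) then poly R (\<alpha> i) > 0 else poly R (\<alpha> i) < 0"
        using sign[OF notin] by auto
    qed
  next
    assume A: Alt
    have notin: "\<alpha> i \<notin> \<beta> ` {1..m}" and par: "even (c (\<alpha> i)) \<longleftrightarrow> even (n - 1 - i)"
      if i: "i \<in> {1..n - 1}" for i
    proof -
      have "poly R (\<alpha> i) \<noteq> 0" using A i unfolding Alt_def by (metis less_irrefl)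
      then show ni: "\<alpha> i \<notin> \<beta> ` {1..m}" using beta_roots m_def by auto
      have "poly R (\<alpha> i) > 0 \<longleftrightarrow> even (n - 1 - i)" using A i unfolding Alt_def
        by (metis less_asym)
      then show "even (c (\<alpha> i)) \<longleftrightarrow> even (n - 1 - i)" using sign[OF ni] by simp
    qed
    define d where "d i = c (\<alpha> i)" for i
    have dle: "d i \<le> m" for i
    proof -
      have "d i \<le> card {1..m}" unfolding d_def c_def by (rule card_mono) auto
      then show ?thesis by simp
    qed
    have dstep: "d (i + 1) < d i" if i: "1 \<le> i" "i + 1 \<le> n - 1" for i
    proof -
      have "d (i + 1) \<le> d i" unfolding d_def c_def
        by (rule card_mono) (use amono[of i "i+1"] i in auto)
      moreover have "d (i + 1) \<noteq> d i"
      proof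
        assume "d (i + 1) = d i"
        then have "even (n - 1 - (i + 1)) \<longleftrightarrow> even (n - 1 - i)"
          using par[of i] par[of "i+1"] i unfolding d_def by auto
        moreover have "n - 1 - i = Suc (n - 1 - (i + 1))" using i by simp
        ultimately show False by (metis even_Suc)
      qed
      ultimately show ?thesis by simp
    qed
    have c1: "i \<le> n - 1 \<longrightarrow> d i + i \<le> m + 1" if "1 \<le> i" for i
      using that
    proof (induction i rule: dec_induct)
      case base then show ?case using dle[of 1] by simp
    next
      case (step k)
      then show ?case using dstep[of k] by auto
    qed
    have c2: "t \<le> n - 2 \<longrightarrow> d (n - 1 - t) \<ge> t" for t
    proof (induction t)
      case 0 then show ?case by simp
    next
      case (Suc t)
      show ?case
      proof
        assume t: "Suc t \<le> n - 2"
        have "d (n - 1 - Suc t + 1) < d (n - 1 - Suc t)" using t by (intro dstep) auto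
        moreover have "n - 1 - Suc t + 1 = n - 1 - t" using t by simp
        ultimately show "Suc t \<le> d (n - 1 - Suc t)" using Suc t by simp
      qed
    qed
    have dval: "d i = n - 1 - i" if i: "i \<in> {1..n - 1}" for i
    proof -
      have "d i + i \<le> m + 1" using c1[of i] i by auto
      moreover have "d (n - 1 - (n - 1 - i)) \<ge> n - 1 - i" using c2[of "n - 1 - i"] i by auto
      moreover have "n - 1 - (n - 1 - i) = i" using i by auto
      ultimately show ?thesis using nm by simp
    qed
    show I unfolding I_def
    proof
      fix i assume i: "i \<in> {1..n - 2}"
      then have im: "i \<in> {1..m}" using m_def by simp
      have ne1: "\<alpha> i \<noteq> \<beta> i" using notin[of i] im nm by auto
      have ne2: "\<alpha> (i + 1) \<noteq> \<beta> i" using notin[of "i + 1"] im nm by auto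
      have "\<alpha> i < \<beta> i"
      proof (rule ccontr)
        assume "\<not> \<alpha> i < \<beta> i"
        then have lt: "\<beta> i < \<alpha> i" using ne1 by simp
        have "{j\<in>{1..m}. \<beta> j > \<alpha> i} \<subseteq> {i+1..m}"
        proof
          fix j assume j: "j \<in> {j\<in>{1..m}. \<beta> j > \<alpha> i}"
          have "\<not> j \<le> i"
          proof
            assume "j \<le> i"
            then have "\<beta> j \<le> \<beta> i" using ble[of j i] j im by auto
            then show False using j lt by simp
          qed
          then show "j \<in> {i+1..m}" using j by auto
        qed
        then have "d i \<le> card {i+1..m}" unfolding d_def c_def by (rule card_mono[rotated]) simp
        then have "d i \<le> m - i" by simp
        then show False using dval[of i] im nm by auto
      qed
      moreover have "\<beta> i < \<alpha> (i + 1)"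
      proof (rule ccontr)
        assume "\<not> \<beta> i < \<alpha> (i + 1)"
        then have lt: "\<alpha> (i + 1) < \<beta> i" using ne2 by simp
        have "{i..m} \<subseteq> {j\<in>{1..m}. \<beta> j > \<alpha> (i + 1)}"
        proof
          fix j assume j: "j \<in> {i..m}"
          have "\<beta> i \<le> \<beta> j" using ble[of i j] j im by auto
          then show "j \<in> {j\<in>{1..m}. \<beta> j > \<alpha> (i + 1)}" using j im lt by auto
        qed
        then have "card {i..m} \<le> d (i + 1)" unfolding d_def c_def by (rule card_mono[rotated]) simp
        then have "m + 1 - i \<le> d (i + 1)" by simp
        then show False using dval[of "i + 1"] im nm by auto
      qed
      ultimately show "\<alpha> i < \<beta> i \<and> \<beta> i < \<alpha> (i + 1)" by simp
    qed
  qed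
  have fin: "finite A \<Longrightarrow> A \<noteq> {} \<Longrightarrow> (Max (f ` A) < (0::real) \<longleftrightarrow> (\<forall>a\<in>A. f a < 0)) \<and> ((0::real) < Min (f ` A) \<longleftrightarrow> (\<forall>a\<in>A. 0 < f a))" for A :: "nat set" and f
    by simp
  have ne1: "{1..(n - 2) div 2} \<noteq> {}" if "even n" using that n3 by (simp; presburger)
  have ne2: "{1..(n - 1) div 2} \<noteq> {}" using n3 by auto
  show ?thesis
    apply (intro conjI impI)
    subgoal premises p
      using key even_case[OF p n3, of "\<lambda>i. poly R (\<alpha> i)"] ne1[OF p]
      unfolding I_def Alt_def by (simp add: Max_less_iff Min_gr_iff)
    subgoal premises p
      using key odd_case[OF p n3, of "\<lambda>i. poly R (\<alpha> i)"] ne2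
      unfolding I_def Alt_def by (simp add: Max_less_iff Min_gr_iff)
    done
qed

end
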